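(* Let $n\ge2$ and $\nu\in\mathcal{F}_{C_n}$, writing $\nu(\alpha)=(\nu(\alpha)_1,\dots,\nu(\alpha)_{n+1})$. Then the map $\mathsf{b}$ from formulas to $\{0,1\}$ given by $\mathsf{b}(\alpha)=\nu(\alpha)_1$ is a $C_n$-bivaluation, and $\mathsf{b}(\alpha)=1$ iff $\nu(\alpha)\in D_n$.
   Context: $\Sigma$ has unary $\neg$ and binary $\wedge,\vee,\to$; formulas over a denumerable set of variables; $\alpha^0=\alpha$, $\alpha^{k+1}=\neg(\alpha^k\wedge\neg\alpha^k)$. A $C_n$-bivaluation is a map $\mathsf{b}$ from formulas to $\{0,1\}$ such that: (B1) $\mathsf{b}(\alpha\wedge\beta)=1$ iff $\mathsf{b}(\alpha)=\mathsf{b}(\beta)=1$; (B2) $\mathsf{b}(\alpha\vee\beta)=1$ iff $\mathsf{b}(\alpha)=1$ or $\mathsf{b}(\beta)=1$; (B3) $\mathsf{b}(\alpha\to\beta)=1$ iff $\mathsf{b}(\alpha)=0$ or $\mathsf{b}(\beta)=1$; (B4) $\mathsf{b}(\alpha)=0$ implies $\mathsf{b}(\neg\alpha)=1$; (B5) $\mathsf{b}(\neg\neg\alpha)=1$ implies $\mathsf{b}(\alpha)=1$; (B6)$_n$ $\mathsf{b}(\alpha^{n-1})=\mathsf{b}(\neg(\alpha^{n-1}))$ iff $\mathsf{b}(\alpha^n)=0$; (B7) $\mathsf{b}(\alpha)=\mathsf{b}(\neg\alpha)$ iff $\mathsf{b}(\neg(\alpha^1))=1$; (B8) if $\mathsf{b}(\alpha)\ne\mathsf{b}(\neg\alpha)$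 and $\mathsf{b}(\beta)\ne\mathsf{b}(\neg\beta)$ then $\mathsf{b}(\alpha\#\beta)\ne\mathsf{b}(\neg(\alpha\#\beta))$ for $\#\in\{\wedge,\vee,\to\}$. Fix $n\ge2$. $B_n=\{z\in\{0,1\}^{n+1}:(z_1\wedge\dots\wedge z_k)\vee z_{k+1}=1\text{ for all }1\le k\le n\}$, with elements $T_n=(1,0,1,\dots,1)$, $t^n_i$ ($0\le i\le n-2$) having $z_1=z_2=1$ and a single $0$ at coordinate $i+3$, $t^n_{n-1}=(1,\dots,1)$, $F_n=(0,1,\dots,1)$. $D_n=\{z:z_1=1\}$, $Boo_n=\{T_n,F_n\}$, $I_n=B_n\setminus Boo_n$. $\mathcal{A}_{C_n}$ on $B_n$: $\tilde\neg z=\{w\in B_n:w_1=z_2,\ w_2\le z_1\}$; for $\#\in\{\wedge,\vee,\to\}$, $z\tilde\#w=\{u\in Boo_n:u_1=z_1\#w_1\}$ if $z,w\in Boo_n$, else $\{u\in B_n:u_1=z_1\#w_1\}$. A valuation is $\nu$ with $\nu(\neg\alpha)\in\tilde\neg\nu(\alpha)$, $\nu(\alpha\#\beta)\in\nu(\alpha)\tilde\#\nu(\beta)$. $\mathcal{F}_{C_n}$: valuations with $\nu(\alpha)=t^n_0\Rightarrow\nu(\alpha\wedge\neg\alpha)=T_n$, and for $1\le k\le n-1$, $\nu(\alpha)=t^n_k\Rightarrow(\nu(\alpha\wedge\neg\alpha)\in I_n$ and $\nu(\alpha^1)=t^n_{k-1})$. *)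

theory Defs
  imports Main
begin

datatype fm = Var nat | Neg fm | And fm fm | Or fm fm | Imp fm fm

fun pw :: "fm \<Rightarrow> nat \<Rightarrow> fm" where
  "pw a 0 = a"
| "pw a (Suc k) = Neg (And (pw a k) (Neg (pw a k)))"

definition cn_bivaluation :: "nat \<Rightarrow> (fm \<Rightarrow> bool) \<Rightarrow> bool" where
  "cn_bivaluation n b \<longleftrightarrow>
     (\<forall>a c. b (And a c) \<longleftrightarrow> b a \<and> b c) \<and>
     (\<forall>a c. b (Or a c) \<longleftrightarrow> b a \<or> b c) \<and>
     (\<forall>a c. b (Imp a c) \<longleftrightarrow> \<not> b a \<or> b c) \<and>
     (\<forall>a. \<not> b a \<longrightarrow> b (Neg a)) \<and>
     (\<forall>a. b (Neg (Neg a)) \<longrightarrow> b a) \<and>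
     (\<forall>a. (b (pw a (n - 1)) = b (Neg (pw a (n - 1)))) \<longleftrightarrow> \<not> b (pw a n)) \<and>
     (\<forall>a. (b a = b (Neg a)) \<longleftrightarrow> b (Neg (pw a 1))) \<and>
     (\<forall>a c. b a \<noteq> b (Neg a) \<and> b c \<noteq> b (Neg c) \<longrightarrow>
         b (And a c) \<noteq> b (Neg (And a c)) \<and>
         b (Or a c) \<noteq> b (Neg (Or a c)) \<and>
         b (Imp a c) \<noteq> b (Neg (Imp a c)))"

text \<open>Elements of {0,1}^(n+1) are bool lists of length n+1; coordinate i (1-based) is z ! (i-1).\<close>
definition coord :: "bool list \<Rightarrow> nat \<Rightarrow> bool" where
  "coord z i = z ! (i - 1)"

definition Bn :: "nat \<Rightarrow> bool list set" where
  "Bn n = {z. length z = n + 1 \<and>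
              (\<forall>k \<in> {1..n}. (\<forall>j \<in> {1..k}. coord z j) \<or> coord z (k + 1))}"

definition Tn :: "nat \<Rightarrow> bool list" where
  "Tn n = [True, False] @ replicate (n - 1) True"

definition Fn :: "nat \<Rightarrow> bool list" where
  "Fn n = False # replicate n True"

definition tn :: "nat \<Rightarrow> nat \<Rightarrow> bool list" where
  "tn n i = (if i \<le> n - 2 then map (\<lambda>j. j \<noteq> i + 3) [1..<n + 2]
             else replicate (n + 1) True)"

definition Dn :: "nat \<Rightarrow> bool list set" where
  "Dn n = {z \<in> Bn n. coord z 1}"

definition Boo :: "nat \<Rightarrow> bool list set" where
  "Boo n = {Tn n, Fn n}"

definition In :: "nat \<Rightarrow> bool list set" where
  "In n = Bn n - Boo n"

definition neg_op :: "nat \<Rightarrow> bool list \<Rightarrow> bool list set" where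
  "neg_op n z = {w \<in> Bn n. coord w 1 = coord z 2 \<and> coord w 2 \<le> coord z 1}"

definition bin_op :: "nat \<Rightarrow> (bool \<Rightarrow> bool \<Rightarrow> bool) \<Rightarrow> bool list \<Rightarrow> bool list \<Rightarrow> bool list set" where
  "bin_op n f z w =
     (if z \<in> Boo n \<and> w \<in> Boo n then {u \<in> Boo n. coord u 1 = f (coord z 1) (coord w 1)}
      else {u \<in> Bn n. coord u 1 = f (coord z 1) (coord w 1)})"

definition valuation :: "nat \<Rightarrow> (fm \<Rightarrow> bool list) \<Rightarrow> bool" where
  "valuation n v \<longleftrightarrow>
     (\<forall>a. v a \<in> Bn n) \<and>
     (\<forall>a. v (Neg a) \<in> neg_op n (v a)) \<and>
     (\<forall>a c. v (And a c) \<in> bin_op n (\<and>) (v a) (v c)) \<and>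
     (\<forall>a c. v (Or a c) \<in> bin_op n (\<or>) (v a) (v c)) \<and>
     (\<forall>a c. v (Imp a c) \<in> bin_op n (\<longrightarrow>) (v a) (v c))"

definition F_Cn :: "nat \<Rightarrow> (fm \<Rightarrow> bool list) set" where
  "F_Cn n = {v. valuation n v \<and>
     (\<forall>a. v a = tn n 0 \<longrightarrow> v (And a (Neg a)) = Tn n) \<and>
     (\<forall>a k. 1 \<le> k \<and> k \<le> n - 1 \<and> v a = tn n k \<longrightarrow>
          v (And a (Neg a)) \<in> In n \<and> v (pw a 1) = tn n (k - 1))}"

end

theory Submission
  imports Defs
begin

lemma Bn_cases:
  assumes "z \<in> Bn n" "n \<ge> 2"
  shows "z = Fn n \<or> z = Tn n \<or> (\<exists>k\<le>n-1. z = tn n k)"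
proof -
  have len: "length z = n+1" and H: "\<And>k. 1\<le>k \<Longrightarrow> k\<le>n \<Longrightarrow> (\<forall>j\<in>{1..k}. z!(j-1)) \<or> z!k"
    using assms by (auto simp: Bn_def coord_def)
  consider "\<not> z!0" | "z!0" "\<not>z!1" | "z!0" "z!1" by blast
  then show ?thesis
  proof cases
    case 1
    have "z = Fn n"
    proof (rule nth_equalityI)
      show "length z = length (Fn n)" using len by (simp add: Fn_def)
      fix i assume i: "i < length z"
      show "z!i = Fn n ! i"
      proof (cases i)
        case 0 thus ?thesis using 1 by (simp add: Fn_def)
      next
        case (Suc m)
        have "1 \<in> {1..i}" using Suc by simp
        then have "z!i" using H[of i] 1 i len Suc by force
        thus ?thesis using Suc i len by (simp add: Fn_def)
      qed
    qed
    thus ?thesis by simp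
  next
    case 2
    have "z = Tn n"
    proof (rule nth_equalityI)
      show "length z = length (Tn n)" using len assms(2) by (simp add: Tn_def)
      fix i assume i: "i < length z"
      show "z!i = Tn n ! i"
      proof (cases i)
        case 0 thus ?thesis using 2 by (simp add: Tn_def)
      next
        case (Suc m)
        show ?thesis
        proof (cases m)
          case 0 thus ?thesis using 2 Suc by (simp add: Tn_def)
        next
          case (Suc p)
          have "2 \<in> {1..i}" using Suc \<open>i = Suc m\<close> by simp
          have "\<not>(\<forall>j\<in>{1..i}. z!(j-1))"
          proof
            assume "\<forall>j\<in>{1..i}. z!(j-1)"
            then have "z!(2-1)" using \<open>2 \<in> {1..i}\<close> by blast
            then show False using 2 by simp
          qed
          then have "z!i" using H[of i] i len Suc \<open>i = Suc m\<close> by force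
          thus ?thesis using Suc \<open>i = Suc m\<close> i len by (simp add: Tn_def nth_append)
        qed
      qed
    qed
    thus ?thesis by simp
  next
    case 3
    show ?thesis
    proof (cases "\<forall>i<n+1. z!i")
      case True
      have "z = tn n (n-1)"
        by (rule nth_equalityI) (use True len assms(2) in \<open>auto simp: tn_def nth_Cons split: nat.split\<close>)
      thus ?thesis by auto
    next
      case False
      define m where "m = (LEAST i. i < n+1 \<and> \<not> z!i)"
      have ex: "\<exists>i. i < n+1 \<and> \<not> z!i" using False by auto
      have m1: "m < n+1" "\<not> z!m" using LeastI_ex[OF ex] unfolding m_def by auto
      have m2: "z!i" if "i < m" for i
      proof -
        have "\<not>(i<n+1 \<and> \<not>z!i)" using that unfolding m_def by (rule not_less_Least)
        then show "z!i" using that m1 by simp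
      qed
      have mge: "m \<ge> 2" using m1 3 by (cases m; cases "m - 1") auto
      have "m \<noteq> n+1 - 1 \<or> True" by simp
      have mle: "m \<le> n"
      proof (rule ccontr)
        assume "\<not> m \<le> n"
        then have "m = n" using m1 by simp
        then show False using \<open>\<not> m \<le> n\<close> by simp
      qed
      have "z = tn n (m-2)"
      proof (rule nth_equalityI)
        show "length z = length (tn n (m-2))" using len by (simp add: tn_def)
        fix i assume i: "i < length z"
        have tv: "tn n (m-2) ! i = (i \<noteq> m)" using i len mge mle by (auto simp: tn_def nth_upt simp del: upt_Suc)
        show "z!i = tn n (m-2) ! i"
        proof -
          consider "i < m" | "i = m" | "i > m" by linarith
          then show ?thesis
          proof cases
            case 1 thus ?thesis using m2 tv by simp
          next
            case 2 thus ?thesis using m1 tv by simp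
          next
            case 3
            have "m+1 \<in> {1..i}" using 3 by simp
            have "\<not>(\<forall>j\<in>{1..i}. z!(j-1))"
            proof
              assume "\<forall>j\<in>{1..i}. z!(j-1)"
              then have "z!(m+1-1)" using \<open>m+1 \<in> {1..i}\<close> by blast
              then show False using m1 by simp
            qed
            then have "z!i" using H[of i] 3 i len m1 by force
            thus ?thesis using tv 3 by simp
          qed
        qed
      qed
      moreover have "m-2 \<le> n-1" using mle by simp
      ultimately show ?thesis by blast
    qed
  qed
qed

lemma coordF: "n \<ge> 2 \<Longrightarrow> coord (Fn n) 1 = False \<and> coord (Fn n) 2 = True"
  by (cases n) (auto simp: Fn_def coord_def)
lemma coordT: "n \<ge> 2 \<Longrightarrow> coord (Tn n) 1 = True \<and> coord (Tn n) 2 = False"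
  by (auto simp: Tn_def coord_def)
lemma coordt: "n \<ge> 2 \<Longrightarrow> coord (tn n k) 1 = True \<and> coord (tn n k) 2 = True"
proof -
  assume n: "n \<ge> 2"
  have l: "length [1..<n+2] > 1" using n by simp
  have a: "[1..<n+2] ! 0 = 1" "[1..<n+2] ! 1 = 2" using n by (auto simp: nth_upt simp del: upt_Suc)
  show ?thesis using l a by (auto simp: tn_def coord_def simp del: upt_Suc)
qed

lemma Boo_iff:
  assumes "z \<in> Bn n" "n \<ge> 2"
  shows "z \<in> Boo n \<longleftrightarrow> coord z 1 \<noteq> coord z 2"
  using Bn_cases[OF assms] coordF[OF assms(2)] coordT[OF assms(2)] coordt[OF assms(2)]
  by (auto simp: Boo_def)

lemma isF: "z \<in> Bn n \<Longrightarrow> n \<ge> 2 \<Longrightarrow> \<not> coord z 1 \<Longrightarrow> z = Fn n"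
  using Bn_cases coordT coordt by metis

lemma isT: "z \<in> Bn n \<Longrightarrow> n \<ge> 2 \<Longrightarrow> coord z 1 \<Longrightarrow> \<not> coord z 2 \<Longrightarrow> z = Tn n"
  using Bn_cases coordF coordt by metis

lemma binop1: "u \<in> bin_op n f z w \<Longrightarrow> coord u 1 = f (coord z 1) (coord w 1)"
  by (auto simp: bin_op_def split: if_splits)

lemma binopBoo: "u \<in> bin_op n f z w \<Longrightarrow> z \<in> Boo n \<Longrightarrow> w \<in> Boo n \<Longrightarrow> u \<in> Boo n"
  by (auto simp: bin_op_def split: if_splits)

context
  fixes n v
  assumes n2: "n \<ge> 2" and F: "v \<in> F_Cn n"
begin

lemma val: "valuation n v" using F by (simp add: F_Cn_def)

lemma inB: "v a \<in> Bn n" using val by (simp add: valuation_def)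

lemma neg1: "coord (v (Neg a)) 1 = coord (v a) 2"
  using val by (auto simp: valuation_def neg_op_def)

lemma neg2: "coord (v (Neg a)) 2 \<Longrightarrow> coord (v a) 1"
  using val by (auto simp: valuation_def neg_op_def)

lemma and1: "coord (v (And a c)) 1 = (coord (v a) 1 \<and> coord (v c) 1)"
  using val unfolding valuation_def by (metis binop1[where f="(\<and>)"])
lemma or1: "coord (v (Or a c)) 1 = (coord (v a) 1 \<or> coord (v c) 1)"
  using val unfolding valuation_def by (metis binop1[where f="(\<or>)"])
lemma imp1: "coord (v (Imp a c)) 1 = (coord (v a) 1 \<longrightarrow> coord (v c) 1)"
  using val unfolding valuation_def by (metis binop1[where f="(\<longrightarrow>)"])

lemma bins_Boo: "v a \<in> Boo n \<Longrightarrow> v c \<in> Boo n \<Longrightarrow>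
   v (And a c) \<in> Boo n \<and> v (Or a c) \<in> Boo n \<and> v (Imp a c) \<in> Boo n"
  using val binopBoo by (meson valuation_def)

lemma BooN: "v a \<in> Boo n \<longleftrightarrow> coord (v a) 1 \<noteq> coord (v (Neg a)) 1"
  using Boo_iff[OF inB n2] neg1 by simp

lemma stepBoo: "v b \<in> Boo n \<Longrightarrow> v (pw b 1) = Tn n"
proof -
  assume b: "v b \<in> Boo n"
  have "\<not> coord (v (And b (Neg b))) 1" using b BooN and1 by auto
  then have g: "v (And b (Neg b)) = Fn n" using isF inB n2 by blast
  have "coord (v (pw b 1)) 1" using neg1 g coordF n2 by (simp add: numeral_2_eq_2)
  moreover have "\<not> coord (v (pw b 1)) 2" using neg2 g coordF n2 by (metis One_nat_def pw.simps)
  ultimately show ?thesis using isT inB n2 by blast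
qed

lemma stept: "v b = tn n k \<Longrightarrow> k \<le> n - 1 \<Longrightarrow>
   (k = 0 \<and> v (pw b 1) = Fn n) \<or> (k \<ge> 1 \<and> v (pw b 1) = tn n (k-1))"
proof -
  assume b: "v b = tn n k" and k: "k \<le> n - 1"
  show ?thesis
  proof (cases k)
    case 0
    then have g: "v (And b (Neg b)) = Tn n" using F b by (simp add: F_Cn_def)
    have "\<not> coord (v (pw b 1)) 1" using neg1 g coordT n2 by (simp add: numeral_2_eq_2)
    then show ?thesis using isF inB n2 0 by blast
  next
    case (Suc p)
    have H: "\<forall>a k. 1 \<le> k \<and> k \<le> n - 1 \<and> v a = tn n k \<longrightarrow> v (pw a 1) = tn n (k - 1)"
      using F unfolding F_Cn_def by blast
    have "v (pw b 1) = tn n (k-1)" using H[rule_format, of k b] b k Suc by simp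
    then show ?thesis using Suc by simp
  qed
qed

lemma inv: "v (pw a j) \<in> Boo n \<or> (\<exists>k. k + j \<le> n-1 \<and> v (pw a j) = tn n k)"
proof (induction j)
  case 0
  then show ?case using Bn_cases[OF inB n2, of a] by (auto simp: Boo_def)
next
  case (Suc j)
  have e: "pw a (Suc j) = pw (pw a j) 1" by simp
  from Suc show ?case
  proof
    assume "v (pw a j) \<in> Boo n"
    then show ?case using stepBoo e by (simp add: Boo_def)
  next
    assume "\<exists>k. k + j \<le> n-1 \<and> v (pw a j) = tn n k"
    then obtain k where k: "k + j \<le> n-1" "v (pw a j) = tn n k" by blast
    have kk: "k \<le> n-1" using k(1) by simp
    from stept[OF k(2) kk] show ?case
    proof
      assume "k = 0 \<and> v (pw (pw a j) 1) = Fn n"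
      then show ?case using e by (simp add: Boo_def)
    next
      assume "1 \<le> k \<and> v (pw (pw a j) 1) = tn n (k - 1)"
      then show ?case using e k(1) by (intro disjI2 exI[of _ "k-1"]) auto
    qed
  qed
qed

lemma B6: "(coord (v (pw a (n - 1))) 1 = coord (v (Neg (pw a (n - 1)))) 1) \<longleftrightarrow> \<not> coord (v (pw a n)) 1"
proof -
  define b where "b = pw a (n-1)"
  have e: "pw a n = pw b 1" unfolding b_def using n2 by (cases n) auto
  have "(coord (v b) 1 = coord (v (Neg b)) 1) \<longleftrightarrow> \<not> coord (v (pw b 1)) 1"
  using inv[of a "n-1"] unfolding b_def[symmetric]
  proof
    assume B: "v b \<in> Boo n"
    then have "v (pw b 1) = Tn n" by (rule stepBoo)
    then show ?thesis using B BooN coordT[OF n2] by auto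
  next
    assume "\<exists>k. k + (n-1) \<le> n-1 \<and> v b = tn n k"
    then have t: "v b = tn n 0" by auto
    then have "v (pw b 1) = Fn n" using stept[of b 0] by simp
    then show ?thesis using t neg1 coordt[OF n2] coordF[OF n2] by auto
  qed
  then show ?thesis unfolding e b_def .
qed

lemma B7: "(coord (v a) 1 = coord (v (Neg a)) 1) \<longleftrightarrow> coord (v (Neg (pw a 1))) 1"
proof -
  from inv[of a 0] show ?thesis
  proof
    assume "v (pw a 0) \<in> Boo n"
    then show ?thesis using stepBoo[of a] BooN neg1 coordT[OF n2] by auto
  next
    assume "\<exists>k. k + 0 \<le> n-1 \<and> v (pw a 0) = tn n k"
    then obtain k where k: "k \<le> n-1" "v a = tn n k" by auto
    have "coord (v a) 1 = coord (v (Neg a)) 1" using k neg1 coordt[OF n2] by simp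
    moreover have "coord (v (Neg (pw a 1))) 1" using stept[OF k(2) k(1)] neg1 coordt[OF n2] coordF[OF n2] by auto
    ultimately show ?thesis by simp
  qed
qed

end

theorem mainTheorem11:
  fixes n :: nat and v :: "fm \<Rightarrow> bool list"
  assumes "n \<ge> 2" and "v \<in> F_Cn n"
  shows "cn_bivaluation n (\<lambda>a. coord (v a) 1) \<and> (\<forall>a. coord (v a) 1 \<longleftrightarrow> v a \<in> Dn n)"
proof
  note L = and1[OF assms] or1[OF assms] imp1[OF assms] neg1[OF assms] neg2[OF assms]
    B6[OF assms] B7[OF assms]
  have B4: "\<And>a. \<not> coord (v a) 1 \<Longrightarrow> coord (v (Neg a)) 1"
    using isF[OF inB[OF assms]] coordF[OF assms(1)] neg1[OF assms] assms(1) by metis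
  have B8: "\<And>a c. coord (v a) 1 \<noteq> coord (v (Neg a)) 1 \<and> coord (v c) 1 \<noteq> coord (v (Neg c)) 1 \<Longrightarrow>
         coord (v (And a c)) 1 \<noteq> coord (v (Neg (And a c))) 1 \<and>
         coord (v (Or a c)) 1 \<noteq> coord (v (Neg (Or a c))) 1 \<and>
         coord (v (Imp a c)) 1 \<noteq> coord (v (Neg (Imp a c))) 1"
    using BooN[OF assms] bins_Boo[OF assms] by meson
  show "cn_bivaluation n (\<lambda>a. coord (v a) 1)"
    unfolding cn_bivaluation_def using L B4 B8 by auto
  show "\<forall>a. coord (v a) 1 \<longleftrightarrow> v a \<in> Dn n"
    using inB[OF assms] by (auto simp: Dn_def)
qed

end
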